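(* For $1\le i<m+n$ and every $d\ge1$, as operators on $\mathbb V^{\otimes d}$, $$\rho_d(E_iK_i^{-1})=L(e_i)L(e_{i+1}^\ast)|_{\mathbb V^{\otimes d}}\qquad\text{and}\qquad \rho_d(K_iF_i)=L(e_{i+1})L(e_i^\ast)|_{\mathbb V^{\otimes d}}.$$
   Context: $q$ is an indeterminate, $m,n\ge1$, $[m+n]=\{1,\dots,m+n\}$. The Hecke algebra $\mathscr H_d$ is the $\mathbb C(q)$-algebra generated by $T_1,\dots,T_{d-1}$ with relations $(T_i-q)(T_i+q^{-1})=0$, $T_iT_{i+1}T_i=T_{i+1}T_iT_{i+1}$, $T_iT_j=T_jT_i$ ($|i-j|>1$); $T_w=T_{i_1}\cdots T_{i_k}$ for a reduced expression $w=s_{i_1}\cdots s_{i_k}\in\mathfrak S_d$; $\mathscr H_\infty$ is the inductive limit of $\mathscr H_0\subset\mathscr H_1\subset\cdots$, and $T\mapsto T^{\uparrow k}$ is the algebra endomorphism with $T_i^{\uparrow k}=T_{i+k}$. Parity: $\hat i=0$ if $i\le m$, $\hat i=1$ if $i>m$; $q_i=q^{(-1)^{\hat i}}$. $\gamma(i,j)=1$ if $i>j$ and $-1$ if $i\le j$. $\mathbb V$ is the $\mathbb C(q)$-vector space with basis $e_1,\dots,e_{m+n}$, $e_i$ of parity $\hat i$; $e_1^\ast,\dots,e_{m+n}^\ast$ is the dual basis. For $I=(i_d,\dots,i_1)\in[m+n]^d$, $e_I=e_{i_d}\otimes\cdots\otimes e_{i_1}$, written $e_{i_d}\cdots e_{i_1}$;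 $I.s_k$ is $I$ with the entries $i_k,i_{k+1}$ swapped. The right $\mathscr H_d$-action on $\mathbb V^{\otimes d}$: $e_I.T_k=(-1)^{\hat i_k\hat i_{k+1}}e_{I.s_k}$ if $i_k>i_{k+1}$; $=(-1)^{\hat i_k}q_{i_k}e_I$ if $i_k=i_{k+1}$; $=(-1)^{\hat i_k\hat i_{k+1}}e_{I.s_k}+(q-q^{-1})e_I$ if $i_k<i_{k+1}$. Set $\widetilde T_d(\mathbb V)=\mathbb V^{\otimes d}\otimes_{\mathscr H_d}\mathscr H_\infty$ (containing $\mathbb V^{\otimes d}$ as $\mathbb V^{\otimes d}\otimes1$), $\widetilde T(\mathbb V)=\bigoplus_{d\ge0}\widetilde T_d(\mathbb V)$, with product $(e_{j_k}\cdots e_{j_1}\otimes T_\tau)\cdot(e_{i_d}\cdots e_{i_1}\otimes T_\sigma)=e_{j_k}\cdots e_{j_1}e_{i_d}\cdots e_{i_1}\otimes T_\tau^{\uparrow d}T_\sigma$. For $\varphi\in\widetilde T(\mathbb V)$, $L(\varphi)$ is left multiplication by $\varphi$; $L(e_i)$ uses $e_i\otimes1\in\widetilde T_1(\mathbb V)$. For $j\in[m+n]$, $f_j(e_r)=q_j^{-\delta_{jr}}e_r$ and $g_j(e_r)=e_r\otimes T_1^{-\gamma(j,r)}\in\widetilde T_1(\mathbb V)$, and $L(e_j^\ast)=0$ on $\widetilde T_0(\mathbb V)$, $$L(e_j^\ast)(e_{i_d}\cdots e_{i_1}\otimes T_\sigma)=\sum_{k=1}^d(-1)^{\hat j(\hat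 i_d+\cdots+\hat i_{k+1})}\langle e_j^\ast,e_{i_k}\rangle\,g_j(e_{i_d})\cdots g_j(e_{i_{k+1}})f_j(e_{i_{k-1}})\cdots f_j(e_{i_1})\cdot T_\sigma$$ (product in $\widetilde T(\mathbb V)$). $U_q(\mathfrak{gl}(m|n))$ is the $\mathbb C(q)$-superalgebra generated by $E_i,F_i$ ($1\le i<m+n$) and $K_j^{\pm1}$ ($1\le j\le m+n$), with $E_m,F_m$ odd and all other generators even, subject to: $K_iK_j=K_jK_i$, $K_iK_i^{-1}=K_i^{-1}K_i=1$; $K_iE_j=q_i^{\delta_{ij}-\delta_{i,j+1}}E_jK_i$, $K_iF_j=q_i^{\delta_{i,j+1}-\delta_{ij}}F_jK_i$; $E_iF_j-(-1)^{\delta_{im}\delta_{jm}}F_jE_i=\delta_{ij}\frac{K_iK_{i+1}^{-1}-K_i^{-1}K_{i+1}}{q_i-q_i^{-1}}$; $E_iE_j=E_jE_i$, $F_iF_j=F_jF_i$ for $|i-j|>1$; $E_i^2E_j-(q_i+q_i^{-1})E_iE_jE_i+E_jE_i^2=0$ and $F_i^2F_j-(q_i+q_i^{-1})F_iF_jF_i+F_jF_i^2=0$ for $i\ne m$, $|i-j|=1$; $E_m^2=F_m^2=0$, $E_mE_{m-1,m+2}+E_{m-1,m+2}E_m=0$, $F_mF_{m-1,m+2}+F_{m-1,m+2}F_m=0$, where $E_{m-1,m+2}=E_{m-1}E_mE_{m+1}-q^{-1}E_{m-1}E_{m+1}E_m-qE_mE_{m+1}E_{m-1}+E_{m+1}E_mE_{m-1}$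 and $F_{m-1,m+2}$ is defined likewise with $F$'s. The comultiplication is $\Delta(K_i)=K_i\otimes K_i$, $\Delta(E_i)=1\otimes E_i+E_i\otimes K_iK_{i+1}^{-1}$, $\Delta(F_i)=F_i\otimes1+K_{i+1}K_i^{-1}\otimes F_i$; $\Delta^{(1)}=\Delta$, $\Delta^{(r)}=(\Delta\otimes\mathrm{id}^{\otimes r-1})\Delta^{(r-1)}$. $U_q(\mathfrak{gl}(m|n))$ acts on $\mathbb V$ by $K_ie_j=q_i^{\delta_{ij}}e_j$, $E_ie_j=\delta_{i+1,j}e_i$, $F_ie_j=\delta_{ij}e_{i+1}$, and on $\mathbb V^{\otimes d}$ via $\Delta^{(d-1)}$ using the sign rule $(x\otimes y)(v\otimes w)=(-1)^{|y||v|}xv\otimes yw$ for homogeneous $y,v$; this representation is denoted $\rho_d$. *)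

theory Defs
  imports Complex_Main "HOL-Computational_Algebra.Polynomial" "HOL-Computational_Algebra.Fraction_Field"
begin

type_synonym K = "complex poly fract"

definition qv :: K where "qv = Fract [:0, 1:] 1"

text \<open>Parity of an index and q_i (the parameter m is the even dimension).\<close>
definition par :: "nat \<Rightarrow> nat \<Rightarrow> nat" where
  "par m i = (if i \<le> m then 0 else 1)"

definition qi :: "nat \<Rightarrow> nat \<Rightarrow> K" where
  "qi m i = (if i \<le> m then qv else inverse qv)"

text \<open>Storage convention: a multi-index I = (i_d,...,i_1) is stored as the list
  [i_1, ..., i_d], i.e. I ! (k-1) = i_k.  A Hecke word [k_1,...,k_r] stands for
  T_{k_1} ... T_{k_r}.  An element of V^{\<otimes>d} is a formal linear combination
  (list of (coefficient, multi-index)); an element of the free space on the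
  symbols e_I \<otimes> (word) is a list of (coefficient, multi-index, word).\<close>

type_synonym vexpr = "(K \<times> nat list) list"
type_synonym texpr = "(K \<times> nat list \<times> nat list) list"

definition vec :: "texpr \<Rightarrow> (nat list \<times> nat list \<Rightarrow> K)" where
  "vec xs = (\<lambda>p. sum_list [c. (c, I, w) \<leftarrow> xs, (I, w) = p])"

text \<open>Right action of T_k (1 \<le> k < d) on a basis vector e_I of V^{\<otimes>d}.\<close>
definition act :: "nat \<Rightarrow> nat list \<Rightarrow> nat \<Rightarrow> vexpr" where
  "act m I k = (let a = I ! (k - 1); b = I ! k; J = I[k - 1 := b, k := a] in
     if a > b then [((-1) ^ (par m a * par m b), J)]
     else if a = b then [((-1) ^ (par m a) * qi m a, I)]
     else [((-1) ^ (par m a * par m b), J), (qv - inverse qv, I)])"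

definition HeckeRels :: "(K \<times> nat list) list set" where
  "HeckeRels =
     {[(1, [k, k]), (inverse qv, [k]), (- qv, [k]), (-1, [])] | k. 1 \<le> k}
   \<union> {[(1, [k, Suc k, k]), (-1, [Suc k, k, Suc k])] | k. 1 \<le> k}
   \<union> {[(1, [k, l]), (-1, [l, k])] | k l. 1 \<le> k \<and> 1 \<le> l \<and> (k + 1 < l \<or> l + 1 < k)}"

text \<open>The kernel of the presentation of
  \<Oplus>_d V^{\<otimes>d} \<otimes>_{H_d} H_\<infinity> as a quotient of the free space on symbols
  e_I \<otimes> (word): it is spanned by the Hecke relations inside H_\<infinity> and
  by the balancing relations (e_I . T_k) \<otimes> x - e_I \<otimes> T_k x.\<close>
inductive_set TRel :: "nat \<Rightarrow> nat \<Rightarrow> (nat list \<times> nat list \<Rightarrow> K) set" for m n where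
  zero: "(\<lambda>_. 0) \<in> TRel m n"
| add: "x \<in> TRel m n \<Longrightarrow> y \<in> TRel m n \<Longrightarrow> (\<lambda>p. x p + y p) \<in> TRel m n"
| smul: "x \<in> TRel m n \<Longrightarrow> (\<lambda>p. c * x p) \<in> TRel m n"
| hecke: "set I \<subseteq> {1..m + n} \<Longrightarrow> r \<in> HeckeRels \<Longrightarrow>
            vec [(c, I, a @ u @ b). (c, u) \<leftarrow> r] \<in> TRel m n"
| tens: "set I \<subseteq> {1..m + n} \<Longrightarrow> 1 \<le> k \<Longrightarrow> k < length I \<Longrightarrow>
            vec ([(c, J, w). (c, J) \<leftarrow> act m I k] @ [(-1, I, k # w)]) \<in> TRel m n"

definition teq :: "nat \<Rightarrow> nat \<Rightarrow> texpr \<Rightarrow> texpr \<Rightarrow> bool" where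
  "teq m n x y \<longleftrightarrow> (\<lambda>p. vec x p - vec y p) \<in> TRel m n"

text \<open>Product: (e_J \<otimes> T_\<tau>)(e_I \<otimes> T_\<sigma>) = e_J e_I \<otimes> T_\<tau>^{\<up>d} T_\<sigma>, d = length I.\<close>
definition tmul :: "texpr \<Rightarrow> texpr \<Rightarrow> texpr" where
  "tmul x y = [(c * c', I @ J, map (\<lambda>t. t + length I) w' @ w). (c, I, w) \<leftarrow> y, (c', J, w') \<leftarrow> x]"

definition emb :: "vexpr \<Rightarrow> texpr" where
  "emb v = [(c, I, []). (c, I) \<leftarrow> v]"

definition L_e :: "nat \<Rightarrow> texpr \<Rightarrow> texpr" where
  "L_e j x = tmul [(1, [j], [])] x"

text \<open>f_j(e_r) and g_j(e_r) in T~_1(V); T_1^{-1} = T_1 - (q - q^{-1}) in H_\<infinity>.\<close>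
definition fj :: "nat \<Rightarrow> nat \<Rightarrow> nat \<Rightarrow> texpr" where
  "fj m j r = [(if j = r then inverse (qi m j) else 1, [r], [])]"

definition gj :: "nat \<Rightarrow> nat \<Rightarrow> texpr" where
  "gj j r = (if j \<le> r then [(1, [r], [1])]
             else [(1, [r], [1]), (- (qv - inverse qv), [r], [])])"

definition L_dual_basis :: "nat \<Rightarrow> nat \<Rightarrow> nat list \<Rightarrow> nat list \<Rightarrow> texpr" where
  "L_dual_basis m j I \<sigma> = concat
     [ (if I ! (k - 1) = j then
          [((-1) ^ (par m j * sum_list (map (par m) (drop k I))) * c, J, w).
             (c, J, w) \<leftarrow> foldr tmul (rev (map (gj j) (drop k I)) @ rev (map (fj m j) (take (k - 1) I)))
                                  [(1, [], \<sigma>)]]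
        else []).
       k \<leftarrow> [1..<length I + 1]]"

definition L_dual :: "nat \<Rightarrow> nat \<Rightarrow> texpr \<Rightarrow> texpr" where
  "L_dual m j x = concat [[(c * c', J, w). (c', J, w) \<leftarrow> L_dual_basis m j I \<sigma>]. (c, I, \<sigma>) \<leftarrow> x]"

type_synonym vop = "nat \<Rightarrow> (K \<times> nat) list"

definition opE :: "nat \<Rightarrow> vop" where "opE i j = (if j = i + 1 then [(1, i)] else [])"
definition opF :: "nat \<Rightarrow> vop" where "opF i j = (if j = i then [(1, i + 1)] else [])"
definition opK :: "nat \<Rightarrow> nat \<Rightarrow> vop" where "opK m i j = [(if i = j then qi m i else 1, j)]"
definition opKinv :: "nat \<Rightarrow> nat \<Rightarrow> vop" where
  "opKinv m i j = [(if i = j then inverse (qi m i) else 1, j)]"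
definition opId :: vop where "opId j = [(1, j)]"
definition vcomp :: "vop \<Rightarrow> vop \<Rightarrow> vop" where
  "vcomp x y j = [(c * c', b'). (c, b) \<leftarrow> y j, (c', b') \<leftarrow> x b]"

text \<open>Action of a pure tensor x_d \<otimes> ... \<otimes> x_1 of operators (stored as [x_1,...,x_d],
  each with its parity) on e_I, with the super sign rule.\<close>
fun apply_pure :: "nat \<Rightarrow> (bool \<times> vop) list \<Rightarrow> nat list \<Rightarrow> vexpr" where
  "apply_pure m [] [] = [(1, [])]"
| "apply_pure m ((p, x) # ops) (a # I) =
     [((if p \<and> odd (sum_list (map (par m) I)) then -1 else 1) * c * c', b # J).
        (c, b) \<leftarrow> x a, (c', J) \<leftarrow> apply_pure m ops I]"
| "apply_pure m _ _ = []"

text \<open>Iterated coproducts \<Delta>^{(d-1)} of the generators, as sums of pure tensors.\<close>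
definition DeltaE :: "nat \<Rightarrow> nat \<Rightarrow> nat \<Rightarrow> (bool \<times> vop) list list" where
  "DeltaE m i d = [replicate k (False, vcomp (opK m i) (opKinv m (i + 1))) @ [(i = m, opE i)]
                   @ replicate (d - k - 1) (False, opId). k \<leftarrow> [0..<d]]"
definition DeltaF :: "nat \<Rightarrow> nat \<Rightarrow> nat \<Rightarrow> (bool \<times> vop) list list" where
  "DeltaF m i d = [replicate k (False, opId) @ [(i = m, opF i)]
                   @ replicate (d - k - 1) (False, vcomp (opK m (i + 1)) (opKinv m i)). k \<leftarrow> [0..<d]]"
definition DeltaK :: "nat \<Rightarrow> nat \<Rightarrow> nat \<Rightarrow> (bool \<times> vop) list list" where
  "DeltaK m i d = [replicate d (False, opK m i)]"
definition DeltaKinv :: "nat \<Rightarrow> nat \<Rightarrow> nat \<Rightarrow> (bool \<times> vop) list list" where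
  "DeltaKinv m i d = [replicate d (False, opKinv m i)]"

definition rho_tensors :: "nat \<Rightarrow> (bool \<times> vop) list list \<Rightarrow> vexpr \<Rightarrow> vexpr" where
  "rho_tensors m ts v = [(c * c', J). (c, I) \<leftarrow> v, t \<leftarrow> ts, (c', J) \<leftarrow> apply_pure m t I]"

definition rho_EKinv :: "nat \<Rightarrow> nat \<Rightarrow> nat \<Rightarrow> vexpr \<Rightarrow> vexpr" where
  "rho_EKinv m i d v = rho_tensors m (DeltaE m i d) (rho_tensors m (DeltaKinv m i d) v)"
definition rho_KF :: "nat \<Rightarrow> nat \<Rightarrow> nat \<Rightarrow> vexpr \<Rightarrow> vexpr" where
  "rho_KF m i d v = rho_tensors m (DeltaK m i d) (rho_tensors m (DeltaF m i d) v)"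

end

theory Submission
  imports Defs
begin


definition scaleT :: "K \<Rightarrow> texpr \<Rightarrow> texpr" where
  "scaleT s X = map (\<lambda>(c, J, w). (s * c, J, w)) X"

lemma vec_Nil[simp]: "vec [] p = 0" by (simp add: vec_def)
lemma vec_Cons: "vec (x # xs) p = (if (fst (snd x), snd (snd x)) = p then fst x else 0) + vec xs p"
  by (cases x) (auto simp: vec_def)
lemma vec_append: "vec (xs @ ys) p = vec xs p + vec ys p"
  by (simp add: vec_def)
lemma vec_scaleT: "vec (scaleT s X) p = s * vec X p"
  by (induction X) (auto simp: scaleT_def vec_Cons algebra_simps)

lemma TRel_diff: "x \<in> TRel m n \<Longrightarrow> y \<in> TRel m n \<Longrightarrow> (\<lambda>p. x p - y p) \<in> TRel m n"
  using TRel.add[OF _ TRel.smul[of y m n "-1"], of x] by simp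

lemma teq_refl: "teq m n x x"
  unfolding teq_def using TRel.zero by simp

lemma teq_sym: "teq m n x y \<Longrightarrow> teq m n y x"
  unfolding teq_def using TRel.smul[of _ m n "-1"] by fastforce

lemma teq_trans: "teq m n x y \<Longrightarrow> teq m n y z \<Longrightarrow> teq m n x z"
  unfolding teq_def using TRel.add by fastforce

lemma teq_append: "teq m n a b \<Longrightarrow> teq m n c d \<Longrightarrow> teq m n (a @ c) (b @ d)"
  unfolding teq_def using TRel.add[of "\<lambda>p. vec a p - vec b p" m n "\<lambda>p. vec c p - vec d p"]
  by (simp add: vec_append algebra_simps)

lemma teq_scaleT: "teq m n a b \<Longrightarrow> teq m n (scaleT s a) (scaleT s b)"
  unfolding teq_def using TRel.smul[of "\<lambda>p. vec a p - vec b p" m n s]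
  by (simp add: vec_scaleT algebra_simps)

lemma teq_vec: "(\<And>p. vec x p = vec y p) \<Longrightarrow> teq m n x y"
  unfolding teq_def using TRel.zero by simp

lemma teq_map_concat:
  "(\<And>x. x \<in> set xs \<Longrightarrow> teq m n [f x] (g x)) \<Longrightarrow> teq m n (map f xs) (concat (map g xs))"
proof (induction xs)
  case Nil then show ?case by (simp add: teq_refl)
next
  case (Cons a xs)
  then show ?case using teq_append[of m n "[f a]" "g a" "map f xs"] by simp
qed

lemma teq_tens:
  assumes "set I \<subseteq> {1..m + n}" "1 \<le> k" "k < length I"
  shows "teq m n [(c, I, k # w)] (map (\<lambda>(c', J). (c * c', J, w)) (act m I k))"
proof -
  have "teq m n (map (\<lambda>(c, J). (c, J, w)) (act m I k)) [(1, I, k # w)]"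
  proof -
    have "vec (map (\<lambda>(c, J). (c, J, w)) (act m I k) @ [(- 1, I, k # w)]) =
      (\<lambda>p. vec (map (\<lambda>(c, J). (c, J, w)) (act m I k)) p - vec [(1, I, k # w)] p)"
      by (rule ext) (simp add: vec_append vec_Cons)
    then show ?thesis using TRel.tens[OF assms, of w] unfolding teq_def by simp
  qed
  then have "teq m n [(1, I, k # w)] (map (\<lambda>(c, J). (c, J, w)) (act m I k))" by (rule teq_sym)
  from teq_scaleT[OF this, of c] show ?thesis
    by (simp add: scaleT_def case_prod_beta o_def split_def)
qed



fun red :: "nat \<Rightarrow> nat list \<Rightarrow> nat list \<Rightarrow> vexpr" where
  "red m J [] = [(1, J)]"
| "red m J (k # w) = concat (map (\<lambda>(c, J'). map (\<lambda>(c', K). (c * c', K)) (red m J' w)) (act m J k))"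

definition vsum :: "vexpr \<Rightarrow> nat list \<Rightarrow> K" where
  "vsum xs = (\<lambda>J. sum_list [c. (c, J') \<leftarrow> xs, J' = J])"

lemma vsum_Nil[simp]: "vsum [] J = 0" by (simp add: vsum_def)
lemma vsum_Cons[simp]: "vsum ((c, K) # xs) J = (if K = J then c else 0) + vsum xs J"
  by (simp add: vsum_def)
lemma vsum_append[simp]: "vsum (xs @ ys) J = vsum xs J + vsum ys J"
  by (simp add: vsum_def)
lemma vsum_concat: "vsum (concat xss) J = sum_list (map (\<lambda>xs. vsum xs J) xss)"
  by (induction xss) auto
lemma vsum_scale: "vsum (map (\<lambda>(c', K). (c * c', K)) xs) J = c * vsum xs J"
  by (induction xs) (auto simp: algebra_simps)

lemma act_length:
  assumes "(c, J) \<in> set (act m I k)" shows "length J = length I"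
  using assms by (auto simp: act_def Let_def split: if_splits)

lemma act_set:
  assumes "(c, J) \<in> set (act m I k)" "1 \<le> k" "k < length I" shows "set J \<subseteq> set I"
proof -
  have a: "I ! (k - 1) \<in> set I" "I ! k \<in> set I" using assms(2,3) by auto
  have "set (I[k - 1 := I ! k, k := I ! (k - 1)]) \<subseteq> set I"
    using set_update_subset_insert[of "I[k - 1 := I ! k]" k "I ! (k - 1)"]
          set_update_subset_insert[of I "k - 1" "I ! k"] a by auto
  then show ?thesis using assms(1) by (auto simp: act_def Let_def split: if_splits)
qed

lemma red_teq:
  assumes "set J \<subseteq> {1..m + n}" "\<forall>t \<in> set w. 1 \<le> t \<and> t < length J"
  shows "teq m n [(c, J, w)] (emb (map (\<lambda>(c', K). (c * c', K)) (red m J w)))"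
  using assms
proof (induction w arbitrary: J c)
  case Nil
  then show ?case by (simp add: emb_def teq_refl)
next
  case (Cons k w)
  have 1: "teq m n [(c, J, k # w)] (map (\<lambda>(c', J'). (c * c', J', w)) (act m J k))"
    using Cons.prems by (intro teq_tens) auto
  have 2: "teq m n (map (\<lambda>(c', J'). (c * c', J', w)) (act m J k))
       (concat (map (\<lambda>(c', J'). emb (map (\<lambda>(c'', K). (c * c' * c'', K)) (red m J' w))) (act m J k)))"
  proof (rule teq_map_concat)
    fix x assume x: "x \<in> set (act m J k)"
    obtain c' J' where xe: "x = (c', J')" by (cases x)
    have "length J' = length J" "set J' \<subseteq> set J"
      using act_length[of c' J' m J k] act_set[of c' J' m J k] x xe Cons.prems by auto
    then have "teq m n [(c * c', J', w)] (emb (map (\<lambda>(c'', K). (c * c' * c'', K)) (red m J' w)))"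
      using Cons.IH[of J' "c * c'"] Cons.prems by auto
    then show "teq m n [(\<lambda>(c', J'). (c * c', J', w)) x]
        ((\<lambda>(c', J'). emb (map (\<lambda>(c'', K). (c * c' * c'', K)) (red m J' w))) x)"
      using xe by simp
  qed
  have 3: "concat (map (\<lambda>(c', J'). emb (map (\<lambda>(c'', K). (c * c' * c'', K)) (red m J' w))) (act m J k))
     = emb (map (\<lambda>(c', K). (c * c', K)) (red m J (k # w)))"
    by (simp add: emb_def map_concat o_def case_prod_beta mult.assoc split_def)
  show ?case using teq_trans[OF 1 2] 3 by simp
qed

lemma vec_emb: "vec (emb v) (J, w) = (if w = [] then vsum v J else 0)"
  by (induction v) (auto simp: emb_def vec_Cons)

lemma teq_emb: "(\<And>J. vsum a J = vsum b J) \<Longrightarrow> teq m n (emb a) (emb b)"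
  by (rule teq_vec) (auto simp: vec_emb)



definition appf :: "nat \<Rightarrow> (nat list \<Rightarrow> K) \<Rightarrow> nat list \<Rightarrow> K" where
  "appf y f K0 = (if K0 \<noteq> [] \<and> last K0 = y then f (butlast K0) else 0)"

lemma act_append:
  assumes "k < length J"
  shows "act m (J @ [y]) k = map (\<lambda>(c, K). (c, K @ [y])) (act m J k)"
proof -
  have 1: "(J @ [y]) ! (k - 1) = J ! (k - 1)" "(J @ [y]) ! k = J ! k"
    using assms by (auto simp: nth_append)
  have 2: "(J @ [y])[k - 1 := b, k := a] = J[k - 1 := b, k := a] @ [y]" for a b
  proof -
    have "k - 1 < length J" using assms by simp
    then show ?thesis using assms by (simp add: list_update_append)
  qed
  show ?thesis unfolding act_def Let_def 1 2 by simp
qed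

lemma red_append:
  assumes "\<forall>t \<in> set w. t < length J"
  shows "red m (J @ [y]) w = map (\<lambda>(c, K). (c, K @ [y])) (red m J w)"
  using assms
proof (induction w arbitrary: J)
  case Nil then show ?case by simp
next
  case (Cons k w)
  have "red m (J @ [y]) (k # w) =
    concat (map (\<lambda>(c, J'). map (\<lambda>(c', K). (c * c', K)) (red m J' w)) (map (\<lambda>(c, K). (c, K @ [y])) (act m J k)))"
    using Cons.prems by (simp add: act_append)
  also have "\<dots> = concat (map (\<lambda>(c, J'). map (\<lambda>(c', K). (c * c', K)) (map (\<lambda>(c, K). (c, K @ [y])) (red m J' w))) (act m J k))"
  proof -
    have "\<And>c J'. (c, J') \<in> set (act m J k) \<Longrightarrow> red m (J' @ [y]) w = map (\<lambda>(c, K). (c, K @ [y])) (red m J' w)"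
    proof -
      fix c J' assume "(c, J') \<in> set (act m J k)"
      then have "length J' = length J" by (rule act_length)
      then have "\<forall>t \<in> set w. t < length J'" using Cons.prems by simp
      then show "red m (J' @ [y]) w = map (\<lambda>(c, K). (c, K @ [y])) (red m J' w)" by (rule Cons.IH)
    qed
    then show ?thesis by (auto intro!: arg_cong[where f=concat] map_cong)
  qed
  also have "\<dots> = map (\<lambda>(c, K). (c, K @ [y])) (red m J (k # w))"
    by (simp add: map_concat o_def case_prod_beta split_def)
  finally show ?case .
qed

lemma vsum_app: "vsum (map (\<lambda>(c, K). (c, K @ [y])) xs) K0 = appf y (vsum xs) K0"
proof (induction xs)
  case Nil then show ?case by (simp add: appf_def)
next
  case (Cons a xs)
  obtain c K where a: "a = (c, K)" by (cases a)
  have "(K @ [y] = K0) = (K0 \<noteq> [] \<and> last K0 = y \<and> K = butlast K0)"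
    by (cases K0 rule: rev_cases) auto
  then show ?case using Cons a by (auto simp: appf_def)
qed

definition Sem :: "nat \<Rightarrow> nat \<Rightarrow> texpr \<Rightarrow> nat list \<Rightarrow> K" where
  "Sem m l x K0 = sum_list (map (\<lambda>(c, J, w). c * vsum (red m (J @ [l]) w) K0) x)"

lemma Sem_Nil[simp]: "Sem m l [] K0 = 0" by (simp add: Sem_def)
lemma Sem_Cons[simp]: "Sem m l ((c, J, w) # x) K0 = c * vsum (red m (J @ [l]) w) K0 + Sem m l x K0"
  by (simp add: Sem_def)
lemma Sem_append[simp]: "Sem m l (x @ y) K0 = Sem m l x K0 + Sem m l y K0"
  by (simp add: Sem_def)
lemma Sem_concat: "Sem m l (concat xs) K0 = sum_list (map (\<lambda>x. Sem m l x K0) xs)"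
  by (induction xs) auto
lemma Sem_scaleT[simp]: "Sem m l (scaleT s x) K0 = s * Sem m l x K0"
  by (induction x) (auto simp: scaleT_def algebra_simps)

lemma L_e_eq: "L_e l x = map (\<lambda>(c, J, w). (c, J @ [l], w)) x"
  by (induction x) (auto simp: L_e_def tmul_def)

lemma Sem_rx: "vsum (concat (map (\<lambda>(c, J, w). map (\<lambda>(c', K). (c * c', K)) (red m J w)) (L_e l x))) K0
   = Sem m l x K0"
  by (induction x) (auto simp: L_e_eq vsum_concat vsum_scale)

definition wb :: "texpr \<Rightarrow> bool" where
  "wb X \<longleftrightarrow> (\<forall>(c, J, w) \<in> set X. \<forall>t \<in> set w. 1 \<le> t \<and> t \<le> length J)"

definition deg1 :: "texpr \<Rightarrow> bool" where
  "deg1 X \<longleftrightarrow> (\<forall>(c, J, w) \<in> set X. length J = 1 \<and> set w \<subseteq> {1})"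

lemma wb_tmul: "deg1 x \<Longrightarrow> wb y \<Longrightarrow> wb (tmul x y)"
  unfolding wb_def deg1_def tmul_def by fastforce

lemma deg1_gj: "deg1 (gj j r)" by (auto simp: deg1_def gj_def)
lemma deg1_fj: "deg1 (fj m j r)" by (auto simp: deg1_def fj_def)

lemma wb_foldr: "(\<forall>x \<in> set xs. deg1 x) \<Longrightarrow> wb y \<Longrightarrow> wb (foldr tmul xs y)"
  by (induction xs) (auto intro: wb_tmul)

definition Phi :: "nat \<Rightarrow> nat \<Rightarrow> nat \<Rightarrow> nat \<Rightarrow> (nat \<Rightarrow> nat list \<Rightarrow> K) \<Rightarrow> nat list \<Rightarrow> K" where
  "Phi m j z l G K0 = (if l < z then (-1) ^ (par m z * par m l) * appf z (G l) K0
     else if z = l then (-1) ^ (par m z) * qi m z * appf l (G l) K0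
     else (-1) ^ (par m z * par m l) * appf z (G l) K0 + (qv - inverse qv) * appf l (G z) K0)
    - (if j \<le> z then 0 else (qv - inverse qv) * appf l (G z) K0)"

lemma appf_add: "appf y (\<lambda>K. f K + g K) K0 = appf y f K0 + appf y g K0"
  by (simp add: appf_def)

lemma Phi_add: "Phi m j z l (\<lambda>x K. G1 x K + G2 x K) K0 = Phi m j z l G1 K0 + Phi m j z l G2 K0"
  unfolding Phi_def appf_add by (simp add: algebra_simps)

lemma appf_mult: "appf y (\<lambda>K. c * f K) K0 = c * appf y f K0"
  by (simp add: appf_def)

lemma act_top:
  "act m (I @ [z, l]) (Suc (length I)) =
    (if l < z then [((-1) ^ (par m z * par m l), I @ [l, z])]
     else if z = l then [((-1) ^ (par m z) * qi m z, I @ [z, l])]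
     else [((-1) ^ (par m z * par m l), I @ [l, z]), (qv - inverse qv, I @ [z, l])])"
  by (simp add: act_def Let_def nth_append list_update_append)

lemma tmul_gj_single:
  "tmul (gj j z) [(c, I, w)] = (if j \<le> z then [(c, I @ [z], Suc (length I) # w)]
     else [(c, I @ [z], Suc (length I) # w), (c * (inverse qv - qv), I @ [z], w)])"
  by (simp add: tmul_def gj_def)

lemma Sem_tmul_single:
  assumes "\<forall>t \<in> set w. 1 \<le> t \<and> t \<le> length I"
  shows "Sem m l (tmul (gj j z) [(c, I, w)]) K0 = Phi m j z l (\<lambda>x. Sem m x [(c, I, w)]) K0"
proof -
  have w1: "\<forall>t \<in> set w. t < length (I @ [l])" "\<forall>t \<in> set w. t < length (I @ [z])" using assms by auto
  have r1: "vsum (red m (I @ [l, z]) w) K0 = appf z (vsum (red m (I @ [l]) w)) K0"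
    using red_append[OF w1(1), of m z] vsum_app by simp
  have r2: "vsum (red m (I @ [z, l]) w) K0 = appf l (vsum (red m (I @ [z]) w)) K0"
    using red_append[OF w1(2), of m l] vsum_app by simp
  have r3: "vsum (red m (I @ [z, l]) (Suc (length I) # w)) K0 =
     (if l < z then (-1) ^ (par m z * par m l) * vsum (red m (I @ [l, z]) w) K0
     else if z = l then (-1) ^ (par m z) * qi m z * vsum (red m (I @ [z, l]) w) K0
     else (-1) ^ (par m z * par m l) * vsum (red m (I @ [l, z]) w) K0 + (qv - inverse qv) * vsum (red m (I @ [z, l]) w) K0)"
    by (simp add: act_top vsum_concat vsum_scale)
  have S: "Sem m x [(c, I, w)] K' = c * vsum (red m (I @ [x]) w) K'" for x K' by simp
  have L: "Sem m l (tmul (gj j z) [(c, I, w)]) K0 = c * vsum (red m (I @ [z, l]) (Suc (length I) # w)) K0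
     + (if j \<le> z then 0 else c * (inverse qv - qv) * vsum (red m (I @ [z, l]) w) K0)"
    by (simp add: tmul_gj_single del: red.simps)
  show ?thesis
    unfolding L r3 Phi_def S using r1 r2
    by (cases "l < z"; cases "z = l"; cases "j \<le> z") (simp_all add: appf_mult algebra_simps)
qed



lemma tmul_Nil[simp]: "tmul x [] = []" by (simp add: tmul_def)
lemma tmul_append: "tmul x (a @ b) = tmul x a @ tmul x b" by (simp add: tmul_def)
lemma tmul_Cons: "tmul x (y # ys) = tmul x [y] @ tmul x ys"
  using tmul_append[of x "[y]" ys] by simp
lemma tmul_concat: "tmul x (concat ys) = concat (map (tmul x) ys)"
  by (induction ys) (auto simp: tmul_append)
lemma tmul_scaleT: "tmul x (scaleT s y) = scaleT s (tmul x y)"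
  by (induction y) (auto simp: tmul_def scaleT_def mult.assoc)

lemma Sem_tmul_gj:
  assumes "wb Y"
  shows "Sem m l (tmul (gj j z) Y) K0 = Phi m j z l (\<lambda>x. Sem m x Y) K0"
  using assms
proof (induction Y arbitrary: K0)
  case Nil
  then show ?case by (simp add: Phi_def appf_def)
next
  case (Cons y Y)
  obtain c I w where y: "y = (c, I, w)" by (cases y)
  have wy: "\<forall>t \<in> set w. 1 \<le> t \<and> t \<le> length I" and wY: "wb Y"
    using Cons.prems y by (auto simp: wb_def)
  have e: "(\<lambda>x. Sem m x (y # Y)) = (\<lambda>x K. Sem m x [(c, I, w)] K + Sem m x Y K)"
    using y by (auto intro!: ext)
  show ?case
    unfolding e Phi_add
    by (subst tmul_Cons) (simp only: Sem_append y Sem_tmul_single[OF wy] Cons.IH[OF wY])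
qed

definition fc :: "nat \<Rightarrow> nat \<Rightarrow> nat \<Rightarrow> K" where
  "fc m j r = (if j = r then inverse (qi m j) else 1)"

lemma foldr_fj: "foldr tmul (rev (map (fj m j) K')) [(1, [], [])] = [(prod_list (map (fc m j) K'), K', [])]"
proof (induction K' rule: rev_induct)
  case Nil then show ?case by simp
next
  case (snoc x xs)
  then show ?case by (simp add: tmul_def fj_def fc_def)
qed

definition B :: "nat \<Rightarrow> nat \<Rightarrow> nat list \<Rightarrow> nat \<Rightarrow> texpr" where
  "B m j I k = (if I ! (k - 1) = j then scaleT ((-1) ^ (par m j * sum_list (map (par m) (drop k I))))
      (foldr tmul (rev (map (gj j) (drop k I)) @ rev (map (fj m j) (take (k - 1) I))) [(1, [], [])]) else [])"

lemma LB_eq: "L_dual_basis m j I [] = concat (map (B m j I) [1..<length I + 1])"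
  unfolding L_dual_basis_def
  by (rule arg_cong[where f=concat], rule map_cong) (simp_all add: B_def scaleT_def)

lemma wb_scaleT: "wb (scaleT s X) = wb X" by (auto simp: wb_def scaleT_def)
lemma wb_concat: "(\<forall>x \<in> set xs. wb x) \<Longrightarrow> wb (concat xs)" by (auto simp: wb_def)
lemma wb_base: "wb [(1, [], [])]" by (simp add: wb_def)

lemma wb_B: "wb (B m j I k)"
  by (auto simp: B_def wb_scaleT deg1_gj deg1_fj intro!: wb_foldr wb_base) (auto simp: wb_def)

lemma wb_LB: "wb (L_dual_basis m j I [])"
  unfolding LB_eq by (rule wb_concat) (simp add: wb_B)

lemma Sem_B_step:
  assumes "1 \<le> k" "k \<le> length I"
  shows "Sem m l (B m j (I @ [a]) k) K0 = (-1) ^ (par m j * par m a) * Sem m l (tmul (gj j a) (B m j I k)) K0"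
proof -
  have "k - 1 < length I" using assms by simp
  then have 1: "(I @ [a]) ! (k - 1) = I ! (k - 1)" by (simp add: nth_append)
  have 2: "drop k (I @ [a]) = drop k I @ [a]" using assms by simp
  have 3: "take (k - 1) (I @ [a]) = take (k - 1) I" using assms by simp
  show ?thesis
    unfolding B_def 1 2 3
    by (simp add: tmul_scaleT power_add algebra_simps)
qed

lemma Sem_B_last:
  "Sem m l (B m j (I @ [a]) (Suc (length I))) K0 = (if a = j \<and> K0 = I @ [l] then prod_list (map (fc m j) I) else 0)"
  by (simp add: B_def foldr_fj)

lemma Sem_LB_rec:
  "Sem m l (L_dual_basis m j (I @ [a]) []) K0 =
     (if a = j \<and> K0 = I @ [l] then prod_list (map (fc m j) I) else 0)
     + (-1) ^ (par m j * par m a) * Sem m l (tmul (gj j a) (L_dual_basis m j I [])) K0"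
proof -
  have u: "[1..<length (I @ [a]) + 1] = [1..<length I + 1] @ [length I + 1]" by simp
  have s: "sum_list (map (\<lambda>k. Sem m l (B m j (I @ [a]) k) K0) [1..<length I + 1]) =
      sum_list (map (\<lambda>k. (-1) ^ (par m j * par m a) * Sem m l (tmul (gj j a) (B m j I k)) K0) [1..<length I + 1])"
    by (rule arg_cong[where f=sum_list], rule map_cong) (auto simp: Sem_B_step)
  show ?thesis
    unfolding LB_eq u using s
    by (simp add: Sem_concat Sem_B_last sum_list_const_mult tmul_concat o_def del: upt_Suc)
qed



definition sgnp :: "nat \<Rightarrow> (bool \<times> vop) list \<Rightarrow> nat \<Rightarrow> K" where
  "sgnp m ops a = prod_list (map (\<lambda>(p, x). if p \<and> odd (par m a) then -1 else 1) ops)"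

lemma sum_list_par_append: "sum_list (map (par m) (I @ [a])) = sum_list (map (par m) I) + par m a"
  by simp

lemma concat_concat': "concat (concat xss) = concat (map concat xss)"
  by (induction xss) auto

lemma sgnp_Cons: "sgnp m ((p1, y) # ops) a = (if p1 \<and> odd (par m a) then -1 else 1) * sgnp m ops a"
  by (simp add: sgnp_def)

lemma sg_add: "(if p1 \<and> odd (S + t) then - 1 else (1::K)) = (if p1 \<and> odd S then -1 else 1) * (if p1 \<and> odd t then -1 else 1)"
  by auto

lemma sg_add2: "(if p1 \<and> (even S = odd (t::nat)) then - 1 else (1::K)) = (if p1 \<and> odd (S::nat) then -1 else 1) * (if p1 \<and> odd t then -1 else 1)"
  by auto

lemma apply_pure_snoc:
  "length ops = length I \<Longrightarrow> apply_pure m (ops @ [(p, x)]) (I @ [a]) =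
     concat (map (\<lambda>(c', J). map (\<lambda>(c, b). (sgnp m ops a * c' * c, J @ [b])) (x a)) (apply_pure m ops I))"
proof (induction ops I rule: list_induct2)
  case Nil
  then show ?case by (simp add: sgnp_def split_def)
next
  case (Cons o1 ops a1 I)
  obtain p1 y where o1: "o1 = (p1, y)" by (cases o1)
  show ?case
    by (simp add: o1 Cons.IH sgnp_Cons sg_add sg_add2 map_concat concat_concat' o_def split_def mult_ac split del: if_split)
qed



lemma replicate_snoc_diff: "k < d \<Longrightarrow> replicate (d - k) x = replicate (d - Suc k) x @ [x]"
  by (metis Suc_diff_Suc replicate_Suc replicate_append_same)

lemma DeltaE_Suc: "DeltaE m i (Suc d) = map (\<lambda>t. t @ [(False, opId)]) (DeltaE m i d)
   @ [replicate d (False, vcomp (opK m i) (opKinv m (i + 1))) @ [(i = m, opE i)]]"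
  unfolding DeltaE_def by (auto simp: replicate_snoc_diff intro!: map_cong)

lemma DeltaF_Suc: "DeltaF m i (Suc d) = map (\<lambda>t. t @ [(False, vcomp (opK m (i + 1)) (opKinv m i))]) (DeltaF m i d)
   @ [replicate d (False, opId) @ [(i = m, opF i)]]"
  unfolding DeltaF_def by (auto simp: replicate_snoc_diff intro!: map_cong)

lemma DeltaE_len: "t \<in> set (DeltaE m i d) \<Longrightarrow> length t = d"
  by (auto simp: DeltaE_def)
lemma DeltaF_len: "t \<in> set (DeltaF m i d) \<Longrightarrow> length t = d"
  by (auto simp: DeltaF_def)

definition nu :: "nat \<Rightarrow> nat \<Rightarrow> nat \<Rightarrow> K" where
  "nu m i a = (if i = m \<and> odd (par m a) then -1 else 1)"

lemma sgnp_DeltaE: "t \<in> set (DeltaE m i d) \<Longrightarrow> sgnp m t a = nu m i a"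
  by (auto simp: DeltaE_def sgnp_def nu_def)
lemma sgnp_DeltaF: "t \<in> set (DeltaF m i d) \<Longrightarrow> sgnp m t a = nu m i a"
  by (auto simp: DeltaF_def sgnp_def nu_def)
lemma sgnp_rep: "sgnp m (replicate d (False, f)) a = 1"
  by (simp add: sgnp_def)

lemma apply_pure_diag:
  assumes "\<And>r. f r = [(dc r, r)]"
  shows "apply_pure m (replicate (length I) (False, f)) I = [(prod_list (map dc I), I)]"
  by (induction I) (auto simp: assms)

definition AE :: "nat \<Rightarrow> nat \<Rightarrow> nat list \<Rightarrow> vexpr" where
  "AE m i I = concat (map (\<lambda>t. apply_pure m t I) (DeltaE m i (length I)))"
definition AF :: "nat \<Rightarrow> nat \<Rightarrow> nat list \<Rightarrow> vexpr" where
  "AF m i I = concat (map (\<lambda>t. apply_pure m t I) (DeltaF m i (length I)))"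

definition kk :: "nat \<Rightarrow> nat \<Rightarrow> nat \<Rightarrow> K" where
  "kk m i r = (if i + 1 = r then inverse (qi m (i + 1)) else 1) * (if i = r then qi m i else 1)"
definition xx :: "nat \<Rightarrow> nat \<Rightarrow> nat \<Rightarrow> K" where
  "xx m i r = (if i = r then inverse (qi m i) else 1) * (if i + 1 = r then qi m (i + 1) else 1)"

lemma kk_op: "vcomp (opK m i) (opKinv m (Suc i)) r = [(kk m i r, r)]"
  by (simp add: vcomp_def opK_def opKinv_def kk_def)
lemma xx_op: "vcomp (opK m (Suc i)) (opKinv m i) r = [(xx m i r, r)]"
  by (simp add: vcomp_def opK_def opKinv_def xx_def)

lemma prod_list_ones: "prod_list (map (\<lambda>_. (1::K)) I) = 1"
  by (induction I) auto

lemma appf_sum_list: "appf a (\<lambda>K. sum_list (map (\<lambda>t. f t K) ts)) K0 = sum_list (map (\<lambda>t. appf a (f t) K0) ts)"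
  by (induction ts) (auto simp: appf_def)

lemma vsum_snoc_diag1:
  "vsum (concat (map (\<lambda>(c', J). [(s * c', J @ [a])]) X)) K0 = s * appf a (vsum X) K0"
proof -
  have "concat (map (\<lambda>(c', J). [(s * c', J @ [a])]) X) = map (\<lambda>(c, K). (c, K @ [a])) (map (\<lambda>(c', K). (s * c', K)) X)"
    by (induction X) auto
  moreover have "vsum (map (\<lambda>(c', K). (s * c', K)) X) = (\<lambda>K. s * vsum X K)"
    by (rule ext) (rule vsum_scale)
  ultimately show ?thesis
    by (metis (no_types) vsum_app appf_mult)
qed

lemma vsum_snoc_diag2:
  "vsum (concat (map (\<lambda>(c', J). [(s * c' * e, J @ [a])]) X)) K0 = s * e * appf a (vsum X) K0"
  using vsum_snoc_diag1[of "s * e" a X K0] by (simp add: mult_ac)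

lemma vsum_concat_fun: "vsum (concat xss) = (\<lambda>J. sum_list (map (\<lambda>xs. vsum xs J) xss))"
  by (rule ext) (rule vsum_concat)

lemma AE_snoc:
  "vsum (AE m i (I @ [a])) K0 = nu m i a * appf a (vsum (AE m i I)) K0
     + (if a = i + 1 \<and> K0 = I @ [i] then prod_list (map (kk m i) I) else 0)"
proof -
  have 1: "vsum (concat (map (\<lambda>t. apply_pure m t (I @ [a])) (map (\<lambda>t. t @ [(False, opId)]) (DeltaE m i (length I))))) K0
      = nu m i a * appf a (vsum (AE m i I)) K0"
  proof -
    have "vsum (concat (map (\<lambda>t. apply_pure m t (I @ [a])) (map (\<lambda>t. t @ [(False, opId)]) (DeltaE m i (length I))))) K0
       = sum_list (map (\<lambda>t. nu m i a * appf a (vsum (apply_pure m t I)) K0) (DeltaE m i (length I)))"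
      unfolding vsum_concat map_map o_def
      by (rule arg_cong[where f=sum_list], rule map_cong)
         (auto simp: apply_pure_snoc DeltaE_len sgnp_DeltaE opId_def vsum_snoc_diag1)
    also have "\<dots> = nu m i a * appf a (vsum (AE m i I)) K0"
      by (simp add: AE_def vsum_concat_fun appf_sum_list sum_list_const_mult o_def)
    finally show ?thesis .
  qed
  have 2: "apply_pure m (replicate (length I) (False, vcomp (opK m i) (opKinv m (Suc i))) @ [(i = m, opE i)]) (I @ [a])
     = (if a = i + 1 then [(prod_list (map (kk m i) I), I @ [i])] else [])"
    by (simp add: apply_pure_snoc apply_pure_diag[of _ "kk m i"] kk_op sgnp_rep opE_def)
  show ?thesis
    unfolding AE_def length_append_singleton DeltaE_Suc
    using 1 by (auto simp: AE_def 2)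
qed

lemma AF_snoc:
  "vsum (AF m i (I @ [a])) K0 = nu m i a * xx m i a * appf a (vsum (AF m i I)) K0
     + (if a = i \<and> K0 = I @ [i + 1] then 1 else 0)"
proof -
  have 1: "vsum (concat (map (\<lambda>t. apply_pure m t (I @ [a])) (map (\<lambda>t. t @ [(False, vcomp (opK m (i + 1)) (opKinv m i))]) (DeltaF m i (length I))))) K0
      = nu m i a * xx m i a * appf a (vsum (AF m i I)) K0"
  proof -
    have "vsum (concat (map (\<lambda>t. apply_pure m t (I @ [a])) (map (\<lambda>t. t @ [(False, vcomp (opK m (i + 1)) (opKinv m i))]) (DeltaF m i (length I))))) K0
       = sum_list (map (\<lambda>t. nu m i a * xx m i a * appf a (vsum (apply_pure m t I)) K0) (DeltaF m i (length I)))"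
      unfolding vsum_concat map_map o_def
      by (rule arg_cong[where f=sum_list], rule map_cong)
         (auto simp: apply_pure_snoc DeltaF_len sgnp_DeltaF xx_op vsum_snoc_diag2)
    also have "\<dots> = nu m i a * xx m i a * appf a (vsum (AF m i I)) K0"
      by (simp add: AF_def vsum_concat_fun appf_sum_list sum_list_const_mult o_def)
    finally show ?thesis .
  qed
  have 2: "apply_pure m (replicate (length I) (False, opId) @ [(i = m, opF i)]) (I @ [a])
     = (if a = i then [(1, I @ [i + 1])] else [])"
    by (simp add: apply_pure_snoc apply_pure_diag[of _ "\<lambda>_. 1"] opId_def sgnp_rep opF_def prod_list_ones)
  show ?thesis
    unfolding AF_def length_append_singleton DeltaF_Suc
    using 1 by (auto simp: AF_def 2)
qed



lemma qv_nz: "qv \<noteq> 0"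
  by (simp add: qv_def Zero_fract_def eq_fract)

lemma qi_nz: "qi m x \<noteq> 0"
  using qv_nz by (simp add: qi_def)

definition kinv :: "nat \<Rightarrow> nat \<Rightarrow> nat \<Rightarrow> K" where
  "kinv m i r = (if i = r then inverse (qi m i) else 1)"
definition kc :: "nat \<Rightarrow> nat \<Rightarrow> nat \<Rightarrow> K" where
  "kc m i r = (if i = r then qi m i else 1)"

lemma prod_fc1: "prod_list (map (fc m (Suc i)) I) = prod_list (map (kinv m i) I) * prod_list (map (kk m i) I)"
  by (induction I) (auto simp: fc_def kinv_def kk_def qi_nz)

lemma S1: "a \<noteq> i \<Longrightarrow> (-1::K) ^ (par m (Suc i) * par m a) * (-1) ^ (par m a * par m i) = nu m i a"
  by (auto simp: par_def nu_def)

lemma S1': "(-1::K) ^ (par m (Suc i) * par m a) * (-1) ^ (par m i * par m a) = nu m i a"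
  by (auto simp: par_def nu_def)

lemma S2: "(-1::K) ^ (par m (Suc i) * par m i) * ((-1) ^ (par m i) * qi m i - (qv - inverse qv)) = inverse (qi m i) * nu m i i"
  by (auto simp: par_def nu_def qi_def)

lemma Sem_LB_rec2:
  "Sem m l (L_dual_basis m j (I @ [a]) []) K0 =
     (if a = j \<and> K0 = I @ [l] then prod_list (map (fc m j) I) else 0)
     + (-1) ^ (par m j * par m a) * Phi m j a l (\<lambda>x. Sem m x (L_dual_basis m j I [])) K0"
  using Sem_LB_rec[of m l j I a K0] Sem_tmul_gj[OF wb_LB] by simp

lemma ident1:
  "Sem m i (L_dual_basis m (Suc i) I []) K0 = prod_list (map (kinv m i) I) * vsum (AE m i I) K0"
proof (induction I arbitrary: K0 rule: rev_induct)
  case Nil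
  then show ?case by (simp add: L_dual_basis_def AE_def DeltaE_def)
next
  case (snoc a I)
  have G: "Sem m i (L_dual_basis m (Suc i) I []) = (\<lambda>K. prod_list (map (kinv m i) I) * vsum (AE m i I) K)"
    using snoc.IH by (intro ext) simp
  have ka: "kinv m i (Suc i) = 1" by (simp add: kinv_def)
  have L: "Sem m i (L_dual_basis m (Suc i) (I @ [a]) []) K0 =
     (if a = Suc i \<and> K0 = I @ [i] then prod_list (map (fc m (Suc i)) I) else 0)
     + (-1) ^ (par m (Suc i) * par m a) * Phi m (Suc i) a i (\<lambda>x. Sem m x (L_dual_basis m (Suc i) I [])) K0"
    using Sem_LB_rec2[of m i "Suc i" I a K0] by simp
  have R: "prod_list (map (kinv m i) (I @ [a])) * vsum (AE m i (I @ [a])) K0 =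
     kinv m i a * nu m i a * (prod_list (map (kinv m i) I) * appf a (vsum (AE m i I)) K0)
     + (if a = Suc i \<and> K0 = I @ [i] then prod_list (map (kinv m i) I) * prod_list (map (kk m i) I) else 0)"
    by (simp add: AE_snoc ka algebra_simps)
  consider "a < i" | "a = i" | "a = Suc i" | "Suc i < a" by linarith
  then show ?case
  proof cases
    case 1
    then show ?thesis unfolding L R Phi_def G appf_mult
      using S1[of a i m] by (simp add: appf_mult kinv_def algebra_simps)
  next
    case 2
    have Gi: "Sem m a (L_dual_basis m (Suc i) I []) = (\<lambda>K. prod_list (map (kinv m i) I) * vsum (AE m i I) K)"
      using G 2 by simp
    from 2 show ?thesis unfolding L R Phi_def G Gi appf_mult
      using arg_cong[OF S2[of m i], of "\<lambda>t. t * (prod_list (map (kinv m i) I) * appf i (vsum (AE m i I)) K0)"]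
      by (simp add: kinv_def algebra_simps)
  next
    case 3
    then show ?thesis unfolding L R Phi_def G appf_mult
      using S1[of a i m] by (simp add: appf_mult kinv_def prod_fc1 algebra_simps)
  next
    case 4
    then show ?thesis unfolding L R Phi_def G appf_mult
      using S1[of a i m] by (simp add: appf_mult kinv_def algebra_simps)
  qed
qed



lemma appf_delta: "appf a (\<lambda>K. if K = I then c else 0) K0 = (if K0 = I @ [a] then c else 0)"
  by (cases K0 rule: rev_cases) (auto simp: appf_def)

lemma par01: "par m x = 0 \<or> par m x = 1" by (simp add: par_def)

lemma S4: "(-1::K) ^ par m i * (qv - inverse qv) = qi m i - inverse (qi m i)"
  by (auto simp: par_def qi_def)

lemma pp: "par m x * par m x = par m x" by (simp add: par_def)

lemma S_same: "(-1::K) ^ (par m i * par m a) * (-1) ^ (par m a * par m i) = 1"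
  by (auto simp: par_def)

lemma N_lemma:
  "\<exists>c. (\<forall>K0. Sem m i (L_dual_basis m i I []) K0 = (if K0 = I then c else 0))
     \<and> prod_list (map (fc m i) I) + (-1) ^ par m i * (qv - inverse qv) * c = prod_list (map (kc m i) I)"
proof (induction I rule: rev_induct)
  case Nil
  then show ?case by (auto simp: L_dual_basis_def)
next
  case (snoc a I)
  then obtain c where c1: "\<And>K0. Sem m i (L_dual_basis m i I []) K0 = (if K0 = I then c else 0)"
    and c2: "prod_list (map (fc m i) I) + (-1) ^ par m i * (qv - inverse qv) * c = prod_list (map (kc m i) I)"
    by blast
  have G: "Sem m i (L_dual_basis m i I []) = (\<lambda>K. if K = I then c else 0)"
    using c1 by (intro ext) simp
  have L: "Sem m i (L_dual_basis m i (I @ [a]) []) K0 =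
     (if a = i \<and> K0 = I @ [i] then prod_list (map (fc m i) I) else 0)
     + (-1) ^ (par m i * par m a) * Phi m i a i (\<lambda>x. Sem m x (L_dual_basis m i I [])) K0" for K0
    using Sem_LB_rec2[of m i i I a K0] by simp
  show ?case
  proof (cases "a = i")
    case True
    have Gi: "Sem m a (L_dual_basis m i I []) = (\<lambda>K. if K = I then c else 0)" using G True by simp
    have e: "(-1::K) ^ (par m i * par m i) * ((-1) ^ par m i * qi m i) = qi m i"
      using par01[of m i] by auto
    show ?thesis
    proof (intro exI conjI allI)
      fix K0
      show "Sem m i (L_dual_basis m i (I @ [a]) []) K0 =
        (if K0 = I @ [a] then prod_list (map (fc m i) I) + qi m i * c else 0)"
        unfolding L Phi_def G Gi appf_delta using True e by (auto simp: algebra_simps)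
      show "prod_list (map (fc m i) (I @ [a])) + (-1) ^ par m i * (qv - inverse qv) * (prod_list (map (fc m i) I) + qi m i * c)
        = prod_list (map (kc m i) (I @ [a]))"
      proof -
        let ?P = "prod_list (map (fc m i) I)" and ?Q = "prod_list (map (kc m i) I)" and ?q = "qi m i"
        have D: "(-1) ^ par m i * (qv - inverse qv) = ?q - inverse ?q" by (rule S4)
        have c2': "?P + (?q - inverse ?q) * c = ?Q" using c2 D by simp
        have f1: "prod_list (map (fc m i) (I @ [a])) = ?P * inverse ?q" using True by (simp add: fc_def)
        have f2: "prod_list (map (kc m i) (I @ [a])) = ?Q * ?q" using True by (simp add: kc_def)
        have f3: "?P * inverse ?q + (?q - inverse ?q) * (?P + ?q * c) = ?Q * ?q"
          unfolding c2'[symmetric] by (simp add: algebra_simps)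
        show ?thesis unfolding f1 f2 D by (rule f3)
      qed
    qed
  next
    case False
    have Ga: "Sem m a (L_dual_basis m i I []) = Sem m a (L_dual_basis m i I [])" ..
    show ?thesis
    proof (intro exI conjI allI)
      fix K0
      show "Sem m i (L_dual_basis m i (I @ [a]) []) K0 = (if K0 = I @ [a] then c else 0)"
        unfolding L Phi_def G appf_delta using False S_same[of m i a] by (auto simp: algebra_simps)
      show "prod_list (map (fc m i) (I @ [a])) + (-1) ^ par m i * (qv - inverse qv) * c
        = prod_list (map (kc m i) (I @ [a]))"
        using False c2 by (simp add: fc_def kc_def)
    qed
  qed
qed



lemma appf_prod: "prod_list (map f K0) * appf a g K0 = f a * appf a (\<lambda>K. prod_list (map f K) * g K) K0"
  by (cases K0 rule: rev_cases) (auto simp: appf_def)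

lemma S7: "(-1::K) ^ (par m i * par m a) * (-1) ^ (par m a * par m (Suc i)) = nu m i a"
  by (auto simp: par_def nu_def)

lemma S8: "(-1::K) ^ (par m i * par m i) * (-1) ^ (par m i * par m (Suc i)) = nu m i i * (kc m i i * xx m i i)"
  using qi_nz[of m i] by (auto simp: par_def nu_def kc_def xx_def)

lemma S9: "(-1::K) ^ (par m i * par m (Suc i)) * ((-1) ^ par m (Suc i) * qi m (Suc i)) = nu m i (Suc i) * xx m i (Suc i)"
  by (auto simp: par_def nu_def xx_def)

lemma ident2:
  "Sem m (Suc i) (L_dual_basis m i I []) K0 = prod_list (map (kc m i) K0) * vsum (AF m i I) K0"
proof (induction I arbitrary: K0 rule: rev_induct)
  case Nil
  then show ?case by (simp add: L_dual_basis_def AF_def DeltaF_def)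
next
  case (snoc a I)
  obtain c where c1: "\<And>K0. Sem m i (L_dual_basis m i I []) K0 = (if K0 = I then c else 0)"
    and c2: "prod_list (map (fc m i) I) + (-1) ^ par m i * (qv - inverse qv) * c = prod_list (map (kc m i) I)"
    using N_lemma[of m i I] by blast
  have Gi: "Sem m i (L_dual_basis m i I []) = (\<lambda>K. if K = I then c else 0)"
    using c1 by (intro ext) simp
  have G: "Sem m (Suc i) (L_dual_basis m i I []) = (\<lambda>K. prod_list (map (kc m i) K) * vsum (AF m i I) K)"
    using snoc.IH by (intro ext) simp
  have L: "Sem m (Suc i) (L_dual_basis m i (I @ [a]) []) K0 =
     (if a = i \<and> K0 = I @ [Suc i] then prod_list (map (fc m i) I) else 0)
     + (-1) ^ (par m i * par m a) * Phi m i a (Suc i) (\<lambda>x. Sem m x (L_dual_basis m i I [])) K0"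
    using Sem_LB_rec2[of m "Suc i" i I a K0] by simp
  have R: "prod_list (map (kc m i) K0) * vsum (AF m i (I @ [a])) K0 =
     kc m i a * nu m i a * xx m i a * appf a (\<lambda>K. prod_list (map (kc m i) K) * vsum (AF m i I) K) K0
     + (if a = i \<and> K0 = I @ [Suc i] then prod_list (map (kc m i) I) else 0)"
  proof -
    have "prod_list (map (kc m i) K0) * vsum (AF m i (I @ [a])) K0 =
       nu m i a * xx m i a * (prod_list (map (kc m i) K0) * appf a (vsum (AF m i I)) K0)
       + (if a = i \<and> K0 = I @ [Suc i] then prod_list (map (kc m i) K0) else 0)"
      by (simp add: AF_snoc algebra_simps)
    also have "\<dots> = kc m i a * nu m i a * xx m i a * appf a (\<lambda>K. prod_list (map (kc m i) K) * vsum (AF m i I) K) K0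
     + (if a = i \<and> K0 = I @ [Suc i] then prod_list (map (kc m i) I) else 0)"
      unfolding appf_prod by (auto simp: kc_def)
    finally show ?thesis .
  qed
  consider "a < i" | "a = i" | "a = Suc i" | "Suc i < a" by linarith
  then show ?case
  proof cases
    case 1
    then show ?thesis unfolding L R Phi_def G
      using S7[of m i a] by (simp add: kc_def xx_def algebra_simps)
  next
    case 2
    have Ga: "Sem m a (L_dual_basis m i I []) = (\<lambda>K. if K = I then c else 0)" using Gi 2 by simp
    have d: "prod_list (map (fc m i) I) + (-1) ^ (par m i * par m i) * ((qv - inverse qv) * c) = prod_list (map (kc m i) I)"
      using c2 by (simp add: pp mult.assoc)
    from 2 show ?thesis unfolding L R Phi_def G Ga appf_delta
      using arg_cong[OF S8[of m i], of "\<lambda>t. t * appf i (\<lambda>K. prod_list (map (kc m i) K) * vsum (AF m i I) K) K0"] d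
      by (cases "K0 = I @ [Suc i]") (simp add: appf_def, simp add: algebra_simps)
  next
    case 3
    then show ?thesis unfolding L R Phi_def G
      using S9[of m i] by (simp add: kc_def algebra_simps)
  next
    case 4
    then show ?thesis unfolding L R Phi_def G
      using S7[of m i a] by (simp add: kc_def xx_def algebra_simps)
  qed
qed



definition rg :: "nat set \<Rightarrow> texpr \<Rightarrow> bool" where
  "rg S X \<longleftrightarrow> (\<forall>(c, J, w) \<in> set X. set J \<subseteq> S)"

lemma rg_tmul: "rg S x \<Longrightarrow> rg S y \<Longrightarrow> rg S (tmul x y)"
  unfolding rg_def tmul_def by fastforce

lemma rg_foldr: "(\<forall>x \<in> set xs. rg S x) \<Longrightarrow> rg S y \<Longrightarrow> rg S (foldr tmul xs y)"
  by (induction xs) (auto intro: rg_tmul)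

lemma rg_scaleT: "rg S (scaleT s X) = rg S X" by (auto simp: rg_def scaleT_def)
lemma rg_Nil: "rg S []" by (simp add: rg_def)
lemma rg_concat: "(\<And>x. x \<in> set xs \<Longrightarrow> rg S x) \<Longrightarrow> rg S (concat xs)" by (fastforce simp: rg_def)

lemma rg_B: "set I \<subseteq> S \<Longrightarrow> rg S (B m j I k)"
proof -
  assume I: "set I \<subseteq> S"
  have "\<forall>x \<in> set (rev (map (gj j) (drop k I)) @ rev (map (fj m j) (take (k - 1) I))). rg S x"
  proof
    fix x assume "x \<in> set (rev (map (gj j) (drop k I)) @ rev (map (fj m j) (take (k - 1) I)))"
    then obtain r where "r \<in> set I" "x = gj j r \<or> x = fj m j r"
      by (auto dest: in_set_dropD in_set_takeD)
    moreover have "r \<in> S" using I calculation(1) by blast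
    ultimately show "rg S x" by (auto simp: rg_def gj_def fj_def split: if_splits)
  qed
  then have "rg S (foldr tmul (rev (map (gj j) (drop k I)) @ rev (map (fj m j) (take (k - 1) I))) [(1, [], [])])"
    by (rule rg_foldr) (simp add: rg_def)
  then show ?thesis by (simp add: B_def rg_scaleT rg_Nil)
qed

lemma rg_LB: "set I \<subseteq> S \<Longrightarrow> rg S (L_dual_basis m j I [])"
proof -
  assume I: "set I \<subseteq> S"
  show ?thesis unfolding LB_eq
    by (rule rg_concat) (auto intro: rg_B[OF I])
qed

lemma L_dual_emb: "L_dual m j (emb v) = concat (map (\<lambda>(c, I). scaleT c (L_dual_basis m j I [])) v)"
  by (induction v) (auto simp: L_dual_def emb_def scaleT_def)

lemma Sem_L_dual: "Sem m l (L_dual m j (emb v)) K0 = sum_list (map (\<lambda>(c, I). c * Sem m l (L_dual_basis m j I []) K0) v)"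
  unfolding L_dual_emb by (induction v) auto

definition rx :: "nat \<Rightarrow> texpr \<Rightarrow> vexpr" where
  "rx m x = concat (map (\<lambda>(c, J, w). map (\<lambda>(c', K). (c * c', K)) (red m J w)) x)"

lemma teq_rx:
  assumes "\<forall>(c, J, w) \<in> set x. set J \<subseteq> {1..m + n} \<and> (\<forall>t \<in> set w. 1 \<le> t \<and> t < length J)"
  shows "teq m n x (emb (rx m x))"
proof -
  have "teq m n (map (\<lambda>y. y) x) (concat (map (\<lambda>(c, J, w). emb (map (\<lambda>(c', K). (c * c', K)) (red m J w))) x))"
  proof (rule teq_map_concat)
    fix y assume "y \<in> set x"
    moreover obtain c J w where yy: "y = (c, J, w)" by (cases y)
    ultimately have "set J \<subseteq> {1..m + n}" "\<forall>t \<in> set w. 1 \<le> t \<and> t < length J"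
      using assms by auto
    then have "teq m n [(c, J, w)] (emb (map (\<lambda>(c', K). (c * c', K)) (red m J w)))"
      by (rule red_teq)
    then show "teq m n [y] ((\<lambda>(c, J, w). emb (map (\<lambda>(c', K). (c * c', K)) (red m J w))) y)"
      using yy by simp
  qed
  moreover have "concat (map (\<lambda>(c, J, w). emb (map (\<lambda>(c', K). (c * c', K)) (red m J w))) x) = emb (rx m x)"
    by (simp add: rx_def emb_def map_concat o_def case_prod_beta split_def)
  ultimately show ?thesis by simp
qed

lemma valid_LHS:
  assumes "\<forall>(c, I) \<in> set v. set I \<subseteq> S" "l \<in> S"
  shows "\<forall>(c, J, w) \<in> set (L_e l (L_dual m j (emb v))). set J \<subseteq> S \<and> (\<forall>t \<in> set w. 1 \<le> t \<and> t < length J)"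
proof -
  have "\<forall>(c, J, w) \<in> set (L_dual m j (emb v)). set J \<subseteq> S \<and> (\<forall>t \<in> set w. 1 \<le> t \<and> t \<le> length J)"
  proof
    fix y assume "y \<in> set (L_dual m j (emb v))"
    then obtain c I where cI: "(c, I) \<in> set v" and y: "y \<in> set (scaleT c (L_dual_basis m j I []))"
      unfolding L_dual_emb by auto
    have "rg S (L_dual_basis m j I [])" using assms(1) cI by (auto intro: rg_LB)
    moreover have "wb (L_dual_basis m j I [])" by (rule wb_LB)
    ultimately show "case y of (c, J, w) \<Rightarrow> set J \<subseteq> S \<and> (\<forall>t \<in> set w. 1 \<le> t \<and> t \<le> length J)"
      using y by (auto simp: scaleT_def rg_def wb_def)
  qed
  note 1 = this
  show ?thesis unfolding L_e_eq
  proof (intro ballI)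
    fix y assume "y \<in> set (map (\<lambda>(c, J, w). (c, J @ [l], w)) (L_dual m j (emb v)))"
    then obtain c J w where cJ: "(c, J, w) \<in> set (L_dual m j (emb v))" and yy: "y = (c, J @ [l], w)" by auto
    from bspec[OF 1 cJ] have "set J \<subseteq> S" "\<forall>t \<in> set w. 1 \<le> t \<and> t \<le> length J" by auto
    then show "case y of (c, J, w) \<Rightarrow> set J \<subseteq> S \<and> (\<forall>t \<in> set w. 1 \<le> t \<and> t < length J)"
      using yy assms(2) by auto
  qed
qed

lemma vsum_rho_tensors:
  "vsum (rho_tensors m ts v) K0 = sum_list (map (\<lambda>(c, I). c * vsum (concat (map (\<lambda>t. apply_pure m t I) ts)) K0) v)"
  by (induction v) (auto simp: rho_tensors_def vsum_concat vsum_scale map_concat o_def case_prod_beta sum_list_const_mult)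

lemma apply_pure_len: "(c, J) \<in> set (apply_pure m ops I) \<Longrightarrow> length J = length I"
  by (induction m ops I arbitrary: c J rule: apply_pure.induct) auto

lemma rho_Kinv: "(\<forall>(c, I) \<in> set v. length I = d) \<Longrightarrow>
   rho_tensors m (DeltaKinv m i d) v = map (\<lambda>(c, I). (c * prod_list (map (kinv m i) I), I)) v"
proof (induction v)
  case Nil then show ?case by (simp add: rho_tensors_def)
next
  case (Cons a v)
  obtain c I where a: "a = (c, I)" by (cases a)
  have "apply_pure m (replicate (length I) (False, opKinv m i)) I = [(prod_list (map (kinv m i) I), I)]"
    by (rule apply_pure_diag) (simp add: opKinv_def kinv_def)
  then show ?case using Cons a by (auto simp: rho_tensors_def DeltaKinv_def)
qed

lemma vsum_rho_K: "(\<forall>(c, J) \<in> set X. length J = d) \<Longrightarrow>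
   vsum (rho_tensors m (DeltaK m i d) X) K0 = prod_list (map (kc m i) K0) * vsum X K0"
proof (induction X)
  case Nil then show ?case by (simp add: rho_tensors_def)
next
  case (Cons a X)
  obtain c J where a: "a = (c, J)" by (cases a)
  have "apply_pure m (replicate (length J) (False, opK m i)) J = [(prod_list (map (kc m i) J), J)]"
    by (rule apply_pure_diag) (simp add: opK_def kc_def)
  then have "rho_tensors m (DeltaK m i d) (a # X) = [(c * prod_list (map (kc m i) J), J)] @ rho_tensors m (DeltaK m i d) X"
    using Cons.prems a by (simp add: rho_tensors_def DeltaK_def)
  then show ?case using Cons a by (auto simp: algebra_simps)
qed



lemma vsum_rx_L: "vsum (rx m (L_e l x)) K0 = Sem m l x K0"
  unfolding rx_def by (rule Sem_rx)

theorem lemma6p5: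
  fixes m n i d :: nat and v :: vexpr
  assumes "1 \<le> m" and "1 \<le> n" and "1 \<le> i" and "i < m + n" and "1 \<le> d"
    and "\<forall>(c, I) \<in> set v. length I = d \<and> set I \<subseteq> {1..m + n}"
  shows "teq m n (L_e i (L_dual m (i + 1) (emb v))) (emb (rho_EKinv m i d v))
       \<and> teq m n (L_e (i + 1) (L_dual m i (emb v))) (emb (rho_KF m i d v))"
proof
  have vS: "\<forall>(c, I) \<in> set v. set I \<subseteq> {1..m + n}" using assms(6) by auto
  have vL: "\<forall>(c, I) \<in> set v. length I = d" using assms(6) by auto
  have iS: "i \<in> {1..m + n}" "i + 1 \<in> {1..m + n}" using assms(3,4) by auto
  show "teq m n (L_e i (L_dual m (i + 1) (emb v))) (emb (rho_EKinv m i d v))"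
  proof (rule teq_trans[OF teq_rx[OF valid_LHS[OF vS iS(1)]]], rule teq_emb)
    fix J
    have "vsum (rx m (L_e i (L_dual m (i + 1) (emb v)))) J =
        sum_list (map (\<lambda>(c, I). c * (prod_list (map (kinv m i) I) * vsum (AE m i I) J)) v)"
      by (simp add: vsum_rx_L Sem_L_dual ident1)
    also have "\<dots> = vsum (rho_EKinv m i d v) J"
    proof -
      have "vsum (rho_EKinv m i d v) J = sum_list (map (\<lambda>(c, I). c * vsum (concat (map (\<lambda>t. apply_pure m t I) (DeltaE m i d))) J)
          (map (\<lambda>(c, I). (c * prod_list (map (kinv m i) I), I)) v))"
        unfolding rho_EKinv_def rho_Kinv[OF vL] vsum_rho_tensors ..
      also have "\<dots> = sum_list (map (\<lambda>(c, I). c * (prod_list (map (kinv m i) I) * vsum (AE m i I) J)) v)"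
        unfolding map_map o_def
        by (rule arg_cong[where f=sum_list], rule map_cong) (use vL in \<open>auto simp: AE_def\<close>)
      finally show ?thesis by simp
    qed
    finally show "vsum (rx m (L_e i (L_dual m (i + 1) (emb v)))) J = vsum (rho_EKinv m i d v) J" .
  qed
  show "teq m n (L_e (i + 1) (L_dual m i (emb v))) (emb (rho_KF m i d v))"
  proof (rule teq_trans[OF teq_rx[OF valid_LHS[OF vS iS(2)]]], rule teq_emb)
    fix J
    have "vsum (rx m (L_e (i + 1) (L_dual m i (emb v)))) J =
        sum_list (map (\<lambda>(c, I). c * (prod_list (map (kc m i) J) * vsum (AF m i I) J)) v)"
      by (simp add: vsum_rx_L Sem_L_dual ident2)
    also have "\<dots> = vsum (rho_KF m i d v) J"
    proof -
      have len: "\<forall>(c, K) \<in> set (rho_tensors m (DeltaF m i d) v). length K = d"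
        using vL by (auto simp: rho_tensors_def dest!: apply_pure_len)
      have "vsum (rho_KF m i d v) J = prod_list (map (kc m i) J) * vsum (rho_tensors m (DeltaF m i d) v) J"
        unfolding rho_KF_def by (rule vsum_rho_K[OF len])
      also have "\<dots> = prod_list (map (kc m i) J) *
          sum_list (map (\<lambda>(c, I). c * vsum (concat (map (\<lambda>t. apply_pure m t I) (DeltaF m i d))) J) v)"
        unfolding vsum_rho_tensors ..
      also have "\<dots> = sum_list (map (\<lambda>(c, I). c * (prod_list (map (kc m i) J) * vsum (AF m i I) J)) v)"
        unfolding sum_list_const_mult[symmetric]
        by (rule arg_cong[where f=sum_list], rule map_cong) (use vL in \<open>auto simp: AF_def algebra_simps\<close>)
      finally show ?thesis by simp
    qed
    finally show "vsum (rx m (L_e (i + 1) (L_dual m i (emb v)))) J = vsum (rho_KF m i d v) J" .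
  qed
qed


end
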